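(* Let $J\in\{1/2,1,3/2,\dots\}$, $M=2J$, $\Delta>M$, let $\mathcal{G}=(\mathcal{V},\mathcal{E})$ be a finite connected graph and $x,y\in\mathcal{V}$ distinct. Then, as operators on $\bigotimes_{z\in\mathcal{V}}\mathbb{C}^{M+1}$, $$-\frac{2J}{\Delta}(J^2-S_x^3S_y^3)\le-\frac{1}{2\Delta}(S_x^+S_y^-+S_x^-S_y^+)\le\frac{2J}{\Delta}(J^2-S_x^3S_y^3)$$ and $$\Big(1-\frac{2J}{\Delta}\Big)(J^2-S_x^3S_y^3)\le h_{xy}\le\Big(1+\frac{2J}{\Delta}\Big)(J^2-S_x^3S_y^3)\le\frac{M}{2}\Big(1+\frac{M}{\Delta}\Big)(\mathcal{N}_x^{loc}+\mathcal{N}_y^{loc}).$$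
   Context: $\mathbb{C}^{M+1}$ has orthonormal basis $\{\delta_j\}_{j=-J}^{J}$; $S^-\delta_j=\sqrt{J(J+1)-j(j-1)}\,\delta_{j-1}$ ($j>-J$), $S^-\delta_{-J}=0$; $S^+\delta_j=\sqrt{J(J+1)-j(j+1)}\,\delta_{j+1}$ ($j<J$), $S^+\delta_J=0$; $S^3\delta_j=j\delta_j$. For an operator $A$ on $\mathbb{C}^{M+1}$, $A_x$ acts as $A$ on the tensor factor at $x$ and as identity elsewhere. $h_{xy}=J^2-\frac{1}{2\Delta}(S_x^+S_y^-+S_x^-S_y^+)-S_x^3S_y^3$ and $\mathcal{N}^{loc}=J-S^3$ (local particle number operator). *)

theory Defs
  imports Complex_Main
begin

text \<open>The local space C^(M+1) has
basis delta_j, j = -J..J; we label delta_j by k = j + J in {0..M}. The tensor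
product over the vertex set is identified with functions on configurations
sigma : 'v => nat with sigma z <= M for all z (finite since 'v is finite).
Operators are kernels (matrices) indexed by configurations.\<close>

definition spinJ :: "nat \<Rightarrow> real" where
  "spinJ M = real M / 2"

type_synonym 'v config = "'v \<Rightarrow> nat"
type_synonym 'v op = "'v config \<Rightarrow> 'v config \<Rightarrow> complex"
type_synonym lop = "nat \<Rightarrow> nat \<Rightarrow> complex"

definition conf :: "nat \<Rightarrow> 'v config set" where
  "conf M = {\<sigma>. \<forall>z. \<sigma> z \<le> M}"

text \<open>Local operators as matrices: A k l = <delta_k, A delta_l>, with j = l - J.\<close>

definition lid :: "nat \<Rightarrow> lop" where
  "lid M k l = (if k = l \<and> l \<le> M then 1 else 0)"

definition S3 :: "nat \<Rightarrow> lop" where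
  "S3 M k l = (if k = l \<and> l \<le> M then complex_of_real (real l - spinJ M) else 0)"

definition Splus :: "nat \<Rightarrow> lop" where
  "Splus M k l = (if l < M \<and> k = l + 1 then
     (let J = spinJ M; j = real l - J in complex_of_real (sqrt (J*(J+1) - j*(j+1)))) else 0)"

definition Sminus :: "nat \<Rightarrow> lop" where
  "Sminus M k l = (if 0 < l \<and> l \<le> M \<and> k = l - 1 then
     (let J = spinJ M; j = real l - J in complex_of_real (sqrt (J*(J+1) - j*(j-1)))) else 0)"

definition Nloc :: "nat \<Rightarrow> lop" where
  "Nloc M k l = complex_of_real (spinJ M) * lid M k l - S3 M k l"

definition at_site :: "lop \<Rightarrow> 'v \<Rightarrow> 'v op" where
  "at_site A x \<sigma> \<tau> = (if (\<forall>z. z \<noteq> x \<longrightarrow> \<sigma> z = \<tau> z) then A (\<sigma> x) (\<tau> x) else 0)"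

definition op_id :: "nat \<Rightarrow> 'v op" where
  "op_id M \<sigma> \<tau> = (if \<sigma> = \<tau> \<and> \<sigma> \<in> conf M then 1 else 0)"

definition op_mult :: "nat \<Rightarrow> 'v op \<Rightarrow> 'v op \<Rightarrow> 'v op" where
  "op_mult M A B \<sigma> \<tau> = (\<Sum>\<rho>\<in>conf M. A \<sigma> \<rho> * B \<rho> \<tau>)"

definition op_scale :: "complex \<Rightarrow> 'v op \<Rightarrow> 'v op" where
  "op_scale c A \<sigma> \<tau> = c * A \<sigma> \<tau>"

definition op_add :: "'v op \<Rightarrow> 'v op \<Rightarrow> 'v op" where
  "op_add A B \<sigma> \<tau> = A \<sigma> \<tau> + B \<sigma> \<tau>"

definition op_sub :: "'v op \<Rightarrow> 'v op \<Rightarrow> 'v op" where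
  "op_sub A B \<sigma> \<tau> = A \<sigma> \<tau> - B \<sigma> \<tau>"

definition qform :: "nat \<Rightarrow> 'v op \<Rightarrow> ('v config \<Rightarrow> complex) \<Rightarrow> complex" where
  "qform M A \<psi> = (\<Sum>\<sigma>\<in>conf M. \<Sum>\<tau>\<in>conf M. cnj (\<psi> \<sigma>) * A \<sigma> \<tau> * \<psi> \<tau>)"

definition op_le :: "nat \<Rightarrow> 'v op \<Rightarrow> 'v op \<Rightarrow> bool" where
  "op_le M A B \<longleftrightarrow> (\<forall>\<psi>. Im (qform M (op_sub B A) \<psi>) = 0 \<and> Re (qform M (op_sub B A) \<psi>) \<ge> 0)"

definition hop :: "nat \<Rightarrow> real \<Rightarrow> 'v \<Rightarrow> 'v \<Rightarrow> 'v op" where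
  "hop M \<Delta> x y = op_scale (complex_of_real (- 1 / (2 * \<Delta>)))
      (op_add (op_mult M (at_site (Splus M) x) (at_site (Sminus M) y))
       (op_mult M (at_site (Sminus M) x) (at_site (Splus M) y)))"

definition zzterm :: "nat \<Rightarrow> 'v \<Rightarrow> 'v \<Rightarrow> 'v op" where
  "zzterm M x y = op_sub (op_scale (complex_of_real ((spinJ M)^2)) (op_id M))
      (op_mult M (at_site (S3 M) x) (at_site (S3 M) y))"

definition hxy :: "nat \<Rightarrow> real \<Rightarrow> 'v \<Rightarrow> 'v \<Rightarrow> 'v op" where
  "hxy M \<Delta> x y = op_sub (op_add (op_scale (complex_of_real ((spinJ M)^2)) (op_id M))
      (hop M \<Delta> x y))
      (op_mult M (at_site (S3 M) x) (at_site (S3 M) y))"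

definition connected_graph :: "('v \<Rightarrow> 'v \<Rightarrow> bool) \<Rightarrow> bool" where
  "connected_graph E \<longleftrightarrow> (\<forall>u v. E u v \<longrightarrow> E v u) \<and> (\<forall>u. \<not> E u u) \<and> (\<forall>u v. E\<^sup>*\<^sup>* u v)"

end

theory Submission imports Defs "HOL-Library.FuncSet" begin

lemma finite_conf: "finite (conf M :: ('v::finite) config set)"
proof -
  have "conf M = PiE (UNIV::'v set) (\<lambda>_. {..M})" by (auto simp: conf_def PiE_def extensional_def)
  then show ?thesis by (simp add: finite_PiE)
qed

lemma mult_at:
  fixes x y :: "'v::finite"
  assumes "x \<noteq> y" "\<sigma> \<in> conf M" "\<tau> \<in> conf M"
  shows "op_mult M (at_site A x) (at_site B y) \<sigma> \<tau> =
    (if (\<forall>z. z \<noteq> x \<and> z \<noteq> y \<longrightarrow> \<sigma> z = \<tau> z) then A (\<sigma> x) (\<tau> x) * B (\<sigma> y) (\<tau> y) else 0)"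
proof -
  let ?r = "\<sigma>(x := \<tau> x)"
  have r: "?r \<in> conf M" using assms by (auto simp: conf_def)
  have "op_mult M (at_site A x) (at_site B y) \<sigma> \<tau> = (\<Sum>\<rho>\<in>conf M. at_site A x \<sigma> \<rho> * at_site B y \<rho> \<tau>)"
    by (simp add: op_mult_def)
  also have "\<dots> = (\<Sum>\<rho>\<in>{?r}. at_site A x \<sigma> \<rho> * at_site B y \<rho> \<tau>)"
  proof (rule sum.mono_neutral_right)
    show "\<forall>i\<in>conf M - {?r}. at_site A x \<sigma> i * at_site B y i \<tau> = 0"
    proof
      fix \<rho> assume "\<rho> \<in> conf M - {?r}"
      then have "\<rho> \<noteq> ?r" by auto
      then obtain z where "\<rho> z \<noteq> ?r z" by (meson ext)
      then show "at_site A x \<sigma> \<rho> * at_site B y \<rho> \<tau> = 0"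
        using assms(1) by (cases "z = x") (auto simp: at_site_def)
    qed
  qed (use r finite_conf in auto)
  also have "\<dots> = (if (\<forall>z. z \<noteq> x \<and> z \<noteq> y \<longrightarrow> \<sigma> z = \<tau> z) then A (\<sigma> x) (\<tau> x) * B (\<sigma> y) (\<tau> y) else 0)"
    using assms(1) by (auto simp: at_site_def)
  finally show ?thesis .
qed

lemma qform_add: "qform M (op_add A B) \<psi> = qform M A \<psi> + qform M B \<psi>"
  by (simp add: qform_def op_add_def algebra_simps sum.distrib)
lemma qform_sub: "qform M (op_sub A B) \<psi> = qform M A \<psi> - qform M B \<psi>"
  by (simp add: qform_def op_sub_def algebra_simps sum_subtractf)
lemma qform_scale: "qform M (op_scale c A) \<psi> = c * qform M A \<psi>"
  by (simp add: qform_def op_scale_def algebra_simps sum_distrib_left)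

lemma qform_diag:
  fixes A :: "('v::finite) op"
  assumes "\<And>\<sigma> \<tau>. \<sigma> \<in> conf M \<Longrightarrow> \<tau> \<in> conf M \<Longrightarrow> A \<sigma> \<tau> = (if \<sigma> = \<tau> then complex_of_real (d \<sigma>) else 0)"
  shows "qform M A \<psi> = complex_of_real (\<Sum>\<sigma>\<in>conf M. d \<sigma> * (cmod (\<psi> \<sigma>))\<^sup>2)"
proof -
  have "qform M A \<psi> = (\<Sum>\<sigma>\<in>conf M. \<Sum>\<tau>\<in>conf M. if \<sigma> = \<tau> then cnj (\<psi> \<sigma>) * complex_of_real (d \<sigma>) * \<psi> \<tau> else 0)"
    unfolding qform_def by (intro sum.cong refl) (simp add: assms)
  also have "\<dots> = (\<Sum>\<sigma>\<in>conf M. cnj (\<psi> \<sigma>) * complex_of_real (d \<sigma>) * \<psi> \<sigma>)"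
    by (simp add: finite_conf)
  also have "\<dots> = (\<Sum>\<sigma>\<in>conf M. complex_of_real (d \<sigma> * (cmod (\<psi> \<sigma>))\<^sup>2))"
  proof (intro sum.cong refl)
    fix \<sigma> show "cnj (\<psi> \<sigma>) * complex_of_real (d \<sigma>) * \<psi> \<sigma> = complex_of_real (d \<sigma> * (cmod (\<psi> \<sigma>))\<^sup>2)"
      using complex_norm_square[of "\<psi> \<sigma>"] by (simp add: algebra_simps)
  qed
  finally show ?thesis by simp
qed

lemma Sminus_Splus: "Sminus M k l = Splus M l k"
proof (cases "0 < l \<and> l \<le> M \<and> k = l - 1")
  case True
  then have k: "real k = real l - 1" "l = k + 1" "k < M" by auto
  show ?thesis using True k by (simp add: Sminus_def Splus_def Let_def algebra_simps)
next
  case False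
  then show ?thesis by (auto simp: Sminus_def Splus_def)
qed

lemma Splus_val: "l < M \<Longrightarrow> Splus M (l+1) l = complex_of_real (sqrt (real (M - l) * real (l+1)))"
  by (simp add: Splus_def Let_def spinJ_def of_nat_diff algebra_simps)

lemma Sminus_val: "0 < l \<Longrightarrow> l \<le> M \<Longrightarrow> Sminus M (l-1) l = complex_of_real (sqrt (real l * real (M + 1 - l)))"
  by (simp add: Sminus_def Let_def spinJ_def of_nat_diff algebra_simps)

lemma sqrt_amgm:
  fixes f g p q :: real
  assumes "0 \<le> f" "0 \<le> g"
  shows "p * sqrt (f * g) * q \<le> (f * p\<^sup>2 + g * q\<^sup>2) / 2"
proof -
  have "0 \<le> (sqrt f * p - sqrt g * q)\<^sup>2" by simp
  then show ?thesis using assms by (simp add: power2_eq_square real_sqrt_mult algebra_simps)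
qed


definition nxt :: "'v \<Rightarrow> 'v \<Rightarrow> 'v config \<Rightarrow> 'v config" where
  "nxt x y \<sigma> = \<sigma>(x := \<sigma> x - 1, y := \<sigma> y + 1)"
definition fw :: "nat \<Rightarrow> 'v \<Rightarrow> 'v \<Rightarrow> 'v config \<Rightarrow> real" where
  "fw M x y \<sigma> = real (\<sigma> x) * (real M - real (\<sigma> y))"
definition gw :: "nat \<Rightarrow> 'v \<Rightarrow> 'v \<Rightarrow> 'v config \<Rightarrow> real" where
  "gw M x y \<sigma> = (real M - real (\<sigma> x)) * real (\<sigma> y)"
definition Zd :: "nat \<Rightarrow> 'v \<Rightarrow> 'v \<Rightarrow> 'v config \<Rightarrow> real" where
  "Zd M x y \<sigma> = (spinJ M)\<^sup>2 - (real (\<sigma> x) - spinJ M) * (real (\<sigma> y) - spinJ M)"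
definition iv :: "'v \<Rightarrow> 'v \<Rightarrow> 'v config \<Rightarrow> 'v config \<Rightarrow> real" where
  "iv x y \<sigma> \<tau> = (if \<tau> = nxt x y \<sigma> \<and> 0 < \<sigma> x then 1 else 0)"

lemma fw_nonneg: "\<sigma> \<in> conf M \<Longrightarrow> 0 \<le> fw M x y \<sigma>"
  by (simp add: fw_def conf_def)
lemma gw_nonneg: "\<sigma> \<in> conf M \<Longrightarrow> 0 \<le> gw M x y \<sigma>"
  by (simp add: gw_def conf_def)
lemma fw_gw_Zd: "fw M x y \<sigma> + gw M x y \<sigma> = 2 * Zd M x y \<sigma>"
  by (simp add: fw_def gw_def Zd_def spinJ_def power2_eq_square algebra_simps)

lemma if_nonneg_aux: "0 \<le> (a::real) \<Longrightarrow> 0 \<le> (if P then a else 0)"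
  by simp

lemma T1_bound:
  fixes x y :: "'v::finite"
  assumes xy: "x \<noteq> y" and s: "\<sigma> \<in> conf M" and t: "\<tau> \<in> conf M"
  shows "cmod (op_mult M (at_site (Splus M) x) (at_site (Sminus M) y) \<sigma> \<tau>)
     \<le> (if \<tau> = nxt x y \<sigma> \<and> 0 < \<sigma> x then sqrt (fw M x y \<sigma> * gw M x y \<tau>) else 0)"
proof -
  have fg: "0 \<le> sqrt (fw M x y \<sigma> * gw M x y \<tau>)"
    using fw_nonneg[OF s] gw_nonneg[OF t] by simp
  have eq: "op_mult M (at_site (Splus M) x) (at_site (Sminus M) y) \<sigma> \<tau> =
    (if (\<forall>z. z \<noteq> x \<and> z \<noteq> y \<longrightarrow> \<sigma> z = \<tau> z) then Splus M (\<sigma> x) (\<tau> x) * Sminus M (\<sigma> y) (\<tau> y) else 0)"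
    using mult_at[OF xy s t] .
  show ?thesis
  proof (cases "(\<forall>z. z \<noteq> x \<and> z \<noteq> y \<longrightarrow> \<sigma> z = \<tau> z) \<and> \<tau> x < M \<and> \<sigma> x = \<tau> x + 1 \<and> 0 < \<tau> y \<and> \<sigma> y = \<tau> y - 1")
    case True
    have tyM: "\<tau> y \<le> M" using t by (simp add: conf_def)
    have nx: "\<tau> = nxt x y \<sigma>"
    proof
      fix z show "\<tau> z = nxt x y \<sigma> z" using True xy by (auto simp: nxt_def)
    qed
    have sp: "Splus M (\<sigma> x) (\<tau> x) = complex_of_real (sqrt (real (M - \<tau> x) * real (\<tau> x + 1)))"
      using True Splus_val[of "\<tau> x" M] by simp
    have sm: "Sminus M (\<sigma> y) (\<tau> y) = complex_of_real (sqrt (real (\<tau> y) * real (M + 1 - \<tau> y)))"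
      using True tyM Sminus_val[of "\<tau> y" M] by simp
    have prod: "real (M - \<tau> x) * real (\<tau> x + 1) * (real (\<tau> y) * real (M + 1 - \<tau> y)) = fw M x y \<sigma> * gw M x y \<tau>"
      using True tyM by (simp add: fw_def gw_def of_nat_diff algebra_simps)
    have "op_mult M (at_site (Splus M) x) (at_site (Sminus M) y) \<sigma> \<tau> = Splus M (\<sigma> x) (\<tau> x) * Sminus M (\<sigma> y) (\<tau> y)"
      unfolding eq using True by auto
    then have "cmod (op_mult M (at_site (Splus M) x) (at_site (Sminus M) y) \<sigma> \<tau>)
        = cmod (complex_of_real (sqrt (real (M - \<tau> x) * real (\<tau> x + 1))) * complex_of_real (sqrt (real (\<tau> y) * real (M + 1 - \<tau> y))))"
      by (simp only: sp sm)
    also have "\<dots> = sqrt (real (M - \<tau> x) * real (\<tau> x + 1)) * sqrt (real (\<tau> y) * real (M + 1 - \<tau> y))"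
      by (simp only: norm_mult norm_of_real) simp
    also have "\<dots> = sqrt (fw M x y \<sigma> * gw M x y \<tau>)"
      by (simp only: real_sqrt_mult[symmetric] prod)
    finally show ?thesis using nx True by simp
  next
    case False
    have "op_mult M (at_site (Splus M) x) (at_site (Sminus M) y) \<sigma> \<tau> = 0"
      using False unfolding eq by (auto simp: Splus_def Sminus_def)
    then show ?thesis using if_nonneg_aux[OF fg] by simp
  qed
qed

lemma cnt1:
  fixes x y :: "'v::finite"
  shows "(\<Sum>\<tau>\<in>conf M. iv x y \<sigma> \<tau>) \<le> 1"
proof -
  have "(\<Sum>\<tau>\<in>conf M. iv x y \<sigma> \<tau>) \<le> (\<Sum>\<tau>\<in>conf M. if \<tau> = nxt x y \<sigma> then 1 else 0)"
    by (intro sum_mono) (simp add: iv_def)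
  also have "\<dots> \<le> 1" by (simp add: finite_conf)
  finally show ?thesis .
qed

lemma cnt2:
  fixes x y :: "'v::finite"
  assumes xy: "x \<noteq> y"
  shows "(\<Sum>\<sigma>\<in>conf M. iv x y \<sigma> \<tau>) \<le> 1"
proof -
  have "(\<Sum>\<sigma>\<in>conf M. iv x y \<sigma> \<tau>) \<le> (\<Sum>\<sigma>\<in>conf M. if \<sigma> = \<tau>(x := \<tau> x + 1, y := \<tau> y - 1) then 1 else 0)"
  proof (intro sum_mono)
    fix \<sigma>
    show "iv x y \<sigma> \<tau> \<le> (if \<sigma> = \<tau>(x := \<tau> x + 1, y := \<tau> y - 1) then 1 else 0)"
    proof (cases "\<tau> = nxt x y \<sigma> \<and> 0 < \<sigma> x")
      case True
      have "\<sigma> = \<tau>(x := \<tau> x + 1, y := \<tau> y - 1)"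
      proof
        fix z show "\<sigma> z = (\<tau>(x := \<tau> x + 1, y := \<tau> y - 1)) z"
          using True xy by (auto simp: nxt_def)
      qed
      then show ?thesis by (simp add: iv_def)
    next
      case False
      then have "iv x y \<sigma> \<tau> = 0" unfolding iv_def by (simp only: if_False)
      then show ?thesis by simp
    qed
  qed
  also have "\<dots> \<le> 1" by (simp add: finite_conf)
  finally show ?thesis .
qed


lemma T1_form_bound:
  fixes x y :: "'v::finite"
  assumes xy: "x \<noteq> y"
  shows "cmod (qform M (op_mult M (at_site (Splus M) x) (at_site (Sminus M) y)) \<psi>)
     \<le> (\<Sum>\<sigma>\<in>conf M. Zd M x y \<sigma> * (cmod (\<psi> \<sigma>))\<^sup>2)"
proof -
  define T where "T = op_mult M (at_site (Splus M) x) (at_site (Sminus M) y)"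
  define n where "n \<sigma> = cmod (\<psi> \<sigma>)" for \<sigma>
  define f where "f = fw M x y"
  define g where "g = gw M x y"
  define C where "C = (conf M :: 'v config set)"
  have fC: "finite C" by (simp add: C_def finite_conf)
  have "cmod (qform M T \<psi>) \<le> (\<Sum>\<sigma>\<in>C. cmod (\<Sum>\<tau>\<in>C. cnj (\<psi> \<sigma>) * T \<sigma> \<tau> * \<psi> \<tau>))"
    unfolding qform_def C_def by (rule norm_sum)
  also have "\<dots> \<le> (\<Sum>\<sigma>\<in>C. \<Sum>\<tau>\<in>C. cmod (cnj (\<psi> \<sigma>) * T \<sigma> \<tau> * \<psi> \<tau>))"
    by (intro sum_mono norm_sum)
  also have "\<dots> = (\<Sum>\<sigma>\<in>C. \<Sum>\<tau>\<in>C. n \<sigma> * cmod (T \<sigma> \<tau>) * n \<tau>)"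
    by (simp add: norm_mult n_def)
  also have "\<dots> \<le> (\<Sum>\<sigma>\<in>C. \<Sum>\<tau>\<in>C. iv x y \<sigma> \<tau> * ((f \<sigma> * (n \<sigma>)\<^sup>2 + g \<tau> * (n \<tau>)\<^sup>2) / 2))"
  proof (intro sum_mono)
    fix \<sigma> \<tau> assume s: "\<sigma> \<in> C" and t: "\<tau> \<in> C"
    have s': "\<sigma> \<in> conf M" and t': "\<tau> \<in> conf M" using s t by (auto simp: C_def)
    have b: "cmod (T \<sigma> \<tau>) \<le> (if \<tau> = nxt x y \<sigma> \<and> 0 < \<sigma> x then sqrt (f \<sigma> * g \<tau>) else 0)"
      using T1_bound[OF xy, of \<sigma> M \<tau>] s t unfolding T_def C_def f_def g_def by blast
    have "n \<sigma> * cmod (T \<sigma> \<tau>) * n \<tau> \<le> n \<sigma> * (if \<tau> = nxt x y \<sigma> \<and> 0 < \<sigma> x then sqrt (f \<sigma> * g \<tau>) else 0) * n \<tau>"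
      using b by (intro mult_right_mono mult_left_mono) (auto simp: n_def)
    also have "\<dots> \<le> iv x y \<sigma> \<tau> * ((f \<sigma> * (n \<sigma>)\<^sup>2 + g \<tau> * (n \<tau>)\<^sup>2) / 2)"
      using sqrt_amgm[OF fw_nonneg[OF s', of x y] gw_nonneg[OF t', of x y], of "n \<sigma>" "n \<tau>"]
      by (auto simp: iv_def f_def g_def)
    finally show "n \<sigma> * cmod (T \<sigma> \<tau>) * n \<tau> \<le> iv x y \<sigma> \<tau> * ((f \<sigma> * (n \<sigma>)\<^sup>2 + g \<tau> * (n \<tau>)\<^sup>2) / 2)" .
  qed
  also have "\<dots> = (\<Sum>\<sigma>\<in>C. \<Sum>\<tau>\<in>C. iv x y \<sigma> \<tau> * (f \<sigma> * (n \<sigma>)\<^sup>2 / 2))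
                 + (\<Sum>\<sigma>\<in>C. \<Sum>\<tau>\<in>C. iv x y \<sigma> \<tau> * (g \<tau> * (n \<tau>)\<^sup>2 / 2))"
    by (simp add: sum.distrib[symmetric] add_divide_distrib distrib_left)
  also have "(\<Sum>\<sigma>\<in>C. \<Sum>\<tau>\<in>C. iv x y \<sigma> \<tau> * (g \<tau> * (n \<tau>)\<^sup>2 / 2))
       = (\<Sum>\<tau>\<in>C. \<Sum>\<sigma>\<in>C. iv x y \<sigma> \<tau> * (g \<tau> * (n \<tau>)\<^sup>2 / 2))"
    by (rule sum.swap)
  also have "(\<Sum>\<sigma>\<in>C. \<Sum>\<tau>\<in>C. iv x y \<sigma> \<tau> * (f \<sigma> * (n \<sigma>)\<^sup>2 / 2)) \<le> (\<Sum>\<sigma>\<in>C. f \<sigma> * (n \<sigma>)\<^sup>2 / 2)"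
  proof (intro sum_mono)
    fix \<sigma> assume s: "\<sigma> \<in> C"
    have nn: "0 \<le> f \<sigma> * (n \<sigma>)\<^sup>2 / 2" using fw_nonneg[of \<sigma> M x y] s by (simp add: f_def C_def)
    have "(\<Sum>\<tau>\<in>C. iv x y \<sigma> \<tau> * (f \<sigma> * (n \<sigma>)\<^sup>2 / 2)) = (\<Sum>\<tau>\<in>C. iv x y \<sigma> \<tau>) * (f \<sigma> * (n \<sigma>)\<^sup>2 / 2)"
      by (simp add: sum_distrib_right)
    also have "\<dots> \<le> 1 * (f \<sigma> * (n \<sigma>)\<^sup>2 / 2)"
      using cnt1[where M=M and x=x and y=y and \<sigma>=\<sigma>] nn unfolding C_def by (intro mult_right_mono) auto
    finally show "(\<Sum>\<tau>\<in>C. iv x y \<sigma> \<tau> * (f \<sigma> * (n \<sigma>)\<^sup>2 / 2)) \<le> f \<sigma> * (n \<sigma>)\<^sup>2 / 2" by simp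
  qed
  also have "(\<Sum>\<tau>\<in>C. \<Sum>\<sigma>\<in>C. iv x y \<sigma> \<tau> * (g \<tau> * (n \<tau>)\<^sup>2 / 2)) \<le> (\<Sum>\<tau>\<in>C. g \<tau> * (n \<tau>)\<^sup>2 / 2)"
  proof (intro sum_mono)
    fix \<tau> assume t: "\<tau> \<in> C"
    have nn: "0 \<le> g \<tau> * (n \<tau>)\<^sup>2 / 2" using gw_nonneg[of \<tau> M x y] t by (simp add: g_def C_def)
    have "(\<Sum>\<sigma>\<in>C. iv x y \<sigma> \<tau> * (g \<tau> * (n \<tau>)\<^sup>2 / 2)) = (\<Sum>\<sigma>\<in>C. iv x y \<sigma> \<tau>) * (g \<tau> * (n \<tau>)\<^sup>2 / 2)"
      by (simp add: sum_distrib_right)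
    also have "\<dots> \<le> 1 * (g \<tau> * (n \<tau>)\<^sup>2 / 2)"
      using cnt2[OF xy, where M=M and \<tau>=\<tau>] nn unfolding C_def by (intro mult_right_mono) auto
    finally show "(\<Sum>\<sigma>\<in>C. iv x y \<sigma> \<tau> * (g \<tau> * (n \<tau>)\<^sup>2 / 2)) \<le> g \<tau> * (n \<tau>)\<^sup>2 / 2" by simp
  qed
  also have "(\<Sum>\<sigma>\<in>C. f \<sigma> * (n \<sigma>)\<^sup>2 / 2) + (\<Sum>\<tau>\<in>C. g \<tau> * (n \<tau>)\<^sup>2 / 2)
      = (\<Sum>\<sigma>\<in>C. Zd M x y \<sigma> * (n \<sigma>)\<^sup>2)"
  proof -
    have "(\<Sum>\<sigma>\<in>C. f \<sigma> * (n \<sigma>)\<^sup>2 / 2) + (\<Sum>\<tau>\<in>C. g \<tau> * (n \<tau>)\<^sup>2 / 2)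
       = (\<Sum>\<sigma>\<in>C. f \<sigma> * (n \<sigma>)\<^sup>2 / 2 + g \<sigma> * (n \<sigma>)\<^sup>2 / 2)" by (simp add: sum.distrib)
    also have "\<dots> = (\<Sum>\<sigma>\<in>C. Zd M x y \<sigma> * (n \<sigma>)\<^sup>2)"
    proof (intro sum.cong refl)
      fix \<sigma>
      have "f \<sigma> + g \<sigma> = 2 * Zd M x y \<sigma>" using fw_gw_Zd by (simp add: f_def g_def)
      then show "f \<sigma> * (n \<sigma>)\<^sup>2 / 2 + g \<sigma> * (n \<sigma>)\<^sup>2 / 2 = Zd M x y \<sigma> * (n \<sigma>)\<^sup>2"
        by (simp add: field_simps) (metis distrib_right mult.assoc mult.commute)
    qed
    finally show ?thesis .
  qed
  finally show ?thesis by (simp add: T_def n_def C_def)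
qed


lemma zz_kernel:
  fixes x y :: "'v::finite"
  assumes xy: "x \<noteq> y" and s: "\<sigma> \<in> conf M" and t: "\<tau> \<in> conf M"
  shows "zzterm M x y \<sigma> \<tau> = (if \<sigma> = \<tau> then complex_of_real (Zd M x y \<sigma>) else 0)"
proof (cases "\<sigma> = \<tau>")
  case True
  have "\<sigma> x \<le> M" "\<sigma> y \<le> M" using s by (auto simp: conf_def)
  moreover have "op_mult M (at_site (S3 M) x) (at_site (S3 M) y) \<sigma> \<sigma> = S3 M (\<sigma> x) (\<sigma> x) * S3 M (\<sigma> y) (\<sigma> y)"
    by (simp add: mult_at[OF xy s s])
  ultimately show ?thesis using True s
    by (simp add: zzterm_def op_sub_def op_scale_def op_id_def S3_def Zd_def)
next
  case False
  have "op_mult M (at_site (S3 M) x) (at_site (S3 M) y) \<sigma> \<tau> = 0"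
  proof (cases "(\<forall>z. z \<noteq> x \<and> z \<noteq> y \<longrightarrow> \<sigma> z = \<tau> z) \<and> \<sigma> x = \<tau> x \<and> \<sigma> y = \<tau> y")
    case True
    then have "\<sigma> = \<tau>" by (metis ext)
    then show ?thesis using False by simp
  next
    case c: False
    show ?thesis unfolding mult_at[OF xy s t] using c by (auto simp: S3_def)
  qed
  then show ?thesis using False by (simp add: zzterm_def op_sub_def op_scale_def op_id_def)
qed

lemma N_kernel:
  assumes s: "\<sigma> \<in> conf M" and t: "\<tau> \<in> conf M"
  shows "at_site (Nloc M) x \<sigma> \<tau> = (if \<sigma> = \<tau> then complex_of_real (real M - real (\<sigma> x)) else 0)"
proof (cases "\<sigma> = \<tau>")
  case True
  have "\<sigma> x \<le> M" using s by (auto simp: conf_def)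
  then show ?thesis using True
    by (simp add: at_site_def Nloc_def lid_def S3_def spinJ_def)
next
  case False
  show ?thesis
  proof (cases "(\<forall>z. z \<noteq> x \<longrightarrow> \<sigma> z = \<tau> z) \<and> \<sigma> x = \<tau> x")
    case True
    then have "\<sigma> = \<tau>" by (metis ext)
    then show ?thesis using False by simp
  next
    case c: False
    show ?thesis using c False by (auto simp: at_site_def Nloc_def lid_def S3_def)
  qed
qed

lemma cnj_Splus: "cnj (Splus M k l) = Splus M k l"
  by (simp add: Splus_def Let_def)

lemma T2_adj:
  fixes x y :: "'v::finite"
  assumes xy: "x \<noteq> y" and s: "\<sigma> \<in> conf M" and t: "\<tau> \<in> conf M"
  shows "op_mult M (at_site (Sminus M) x) (at_site (Splus M) y) \<sigma> \<tau>
       = cnj (op_mult M (at_site (Splus M) x) (at_site (Sminus M) y) \<tau> \<sigma>)"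
  unfolding mult_at[OF xy s t] mult_at[OF xy t s]
  by (auto simp: Sminus_Splus cnj_Splus)

lemma qform_T2:
  fixes x y :: "'v::finite"
  assumes xy: "x \<noteq> y"
  shows "qform M (op_mult M (at_site (Sminus M) x) (at_site (Splus M) y)) \<psi>
       = cnj (qform M (op_mult M (at_site (Splus M) x) (at_site (Sminus M) y)) \<psi>)"
proof -
  define T where "T = op_mult M (at_site (Splus M) x) (at_site (Sminus M) y)"
  have "qform M (op_mult M (at_site (Sminus M) x) (at_site (Splus M) y)) \<psi>
      = (\<Sum>\<sigma>\<in>conf M. \<Sum>\<tau>\<in>conf M. cnj (cnj (\<psi> \<tau>) * T \<tau> \<sigma> * \<psi> \<sigma>))"
    unfolding qform_def T_def by (intro sum.cong refl) (simp add: T2_adj[OF xy] mult.commute mult.left_commute)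
  also have "\<dots> = cnj (\<Sum>\<sigma>\<in>conf M. \<Sum>\<tau>\<in>conf M. cnj (\<psi> \<tau>) * T \<tau> \<sigma> * \<psi> \<sigma>)"
    by (simp only: cnj_sum)
  also have "\<dots> = cnj (\<Sum>\<tau>\<in>conf M. \<Sum>\<sigma>\<in>conf M. cnj (\<psi> \<tau>) * T \<tau> \<sigma> * \<psi> \<sigma>)"
    by (rule arg_cong[where f=cnj], rule sum.swap)
  also have "\<dots> = cnj (qform M T \<psi>)"
    unfolding qform_def by simp
  finally show ?thesis by (simp add: T_def)
qed

theorem mainTheorem2:
  fixes M :: nat and \<Delta> :: real and E :: "'v::finite \<Rightarrow> 'v \<Rightarrow> bool" and x y :: 'v
  assumes "M \<ge> 1" and "\<Delta> > real M" and "connected_graph E" and "x \<noteq> y"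
  shows "op_le M (op_scale (complex_of_real (- 2 * spinJ M / \<Delta>)) (zzterm M x y)) (hop M \<Delta> x y)
       \<and> op_le M (hop M \<Delta> x y) (op_scale (complex_of_real (2 * spinJ M / \<Delta>)) (zzterm M x y))
       \<and> op_le M (op_scale (complex_of_real (1 - 2 * spinJ M / \<Delta>)) (zzterm M x y)) (hxy M \<Delta> x y)
       \<and> op_le M (hxy M \<Delta> x y) (op_scale (complex_of_real (1 + 2 * spinJ M / \<Delta>)) (zzterm M x y))
       \<and> op_le M (op_scale (complex_of_real (1 + 2 * spinJ M / \<Delta>)) (zzterm M x y))
            (op_scale (complex_of_real (real M / 2 * (1 + real M / \<Delta>)))
               (op_add (at_site (Nloc M) x) (at_site (Nloc M) y)))"
proof -
  have xy: "x \<noteq> y" by (rule assms(4))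
  have M1: "real M \<ge> 1" using assms(1) by simp
  have Dp: "\<Delta> > 0" using assms(2) M1 by linarith
  have J2: "2 * spinJ M = real M" by (simp add: spinJ_def)
  have Dc: "complex_of_real \<Delta> \<noteq> 0" using Dp by simp
  define T1 where "T1 = op_mult M (at_site (Splus M) x) (at_site (Sminus M) y)"
  define Z where "Z \<psi> = (\<Sum>\<sigma>\<in>conf M. Zd M x y \<sigma> * (cmod (\<psi> \<sigma>))\<^sup>2)" for \<psi> :: "'v config \<Rightarrow> complex"
  define R where "R \<psi> = Re (qform M T1 \<psi>)" for \<psi>
  have hopq: "qform M (hop M \<Delta> x y) \<psi> = complex_of_real (- R \<psi> / \<Delta>)" for \<psi>
  proof -
    have "qform M (hop M \<Delta> x y) \<psi> = complex_of_real (-1/(2*\<Delta>)) * (qform M T1 \<psi> + cnj (qform M T1 \<psi>))"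
      unfolding hop_def qform_scale qform_add qform_T2[OF xy] T1_def ..
    also have "qform M T1 \<psi> + cnj (qform M T1 \<psi>) = complex_of_real (2 * R \<psi>)"
      by (simp add: R_def complex_add_cnj)
    also have "complex_of_real (-1/(2*\<Delta>)) * complex_of_real (2 * R \<psi>) = complex_of_real (- R \<psi> / \<Delta>)"
      by (subst of_real_mult[symmetric]) (use Dp in simp)
    finally show ?thesis .
  qed
  have zq: "qform M (zzterm M x y) \<psi> = complex_of_real (Z \<psi>)" for \<psi>
    unfolding Z_def by (rule qform_diag) (rule zz_kernel[OF xy])
  have bnd: "\<bar>R \<psi>\<bar> \<le> Z \<psi>" for \<psi>
    using abs_Re_le_cmod[of "qform M T1 \<psi>"] T1_form_bound[OF xy, of M \<psi>] unfolding R_def Z_def T1_def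
    by linarith
  have Zpos: "0 \<le> Z \<psi>" for \<psi> using bnd[of \<psi>] by linarith
  have MZ: "Z \<psi> \<le> real M * Z \<psi>" for \<psi> using Zpos[of \<psi>] M1 by (simp add: mult_le_cancel_right1)
  have hxyq: "qform M (hxy M \<Delta> x y) \<psi> = qform M (zzterm M x y) \<psi> + qform M (hop M \<Delta> x y) \<psi>" for \<psi>
    unfolding hxy_def zzterm_def qform_add qform_sub by simp
  have Nq: "qform M (op_add (at_site (Nloc M) x) (at_site (Nloc M) y)) \<psi>
     = complex_of_real (\<Sum>\<sigma>\<in>conf M. (real M - real (\<sigma> x) + (real M - real (\<sigma> y))) * (cmod (\<psi> \<sigma>))\<^sup>2)" for \<psi>
    by (rule qform_diag) (auto simp: op_add_def N_kernel)
  have i1: "op_le M (op_scale (complex_of_real (- 2 * spinJ M / \<Delta>)) (zzterm M x y)) (hop M \<Delta> x y)"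
    unfolding op_le_def
  proof
    fix \<psi>
    have "qform M (op_sub (hop M \<Delta> x y) (op_scale (complex_of_real (- 2 * spinJ M / \<Delta>)) (zzterm M x y))) \<psi>
       = complex_of_real ((real M * Z \<psi> - R \<psi>) / \<Delta>)"
      unfolding qform_sub qform_scale hopq zq using J2 Dc by (simp add: field_simps)
    moreover have "0 \<le> (real M * Z \<psi> - R \<psi>) / \<Delta>" using bnd[of \<psi>] MZ[of \<psi>] Dp by simp
    ultimately show "Im (qform M (op_sub (hop M \<Delta> x y) (op_scale (complex_of_real (- 2 * spinJ M / \<Delta>)) (zzterm M x y))) \<psi>) = 0 \<and>
      0 \<le> Re (qform M (op_sub (hop M \<Delta> x y) (op_scale (complex_of_real (- 2 * spinJ M / \<Delta>)) (zzterm M x y))) \<psi>)" by simp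
  qed
  have i2: "op_le M (hop M \<Delta> x y) (op_scale (complex_of_real (2 * spinJ M / \<Delta>)) (zzterm M x y))"
    unfolding op_le_def
  proof
    fix \<psi>
    have "qform M (op_sub (op_scale (complex_of_real (2 * spinJ M / \<Delta>)) (zzterm M x y)) (hop M \<Delta> x y)) \<psi> = complex_of_real ((real M * Z \<psi> + R \<psi>) / \<Delta>)"
      unfolding qform_sub qform_scale  hopq zq using J2 Dc by (simp add: field_simps)
    moreover have "0 \<le> (real M * Z \<psi> + R \<psi>) / \<Delta>" using bnd[of \<psi>] MZ[of \<psi>] Dp by simp
    ultimately show "Im (qform M (op_sub (op_scale (complex_of_real (2 * spinJ M / \<Delta>)) (zzterm M x y)) (hop M \<Delta> x y)) \<psi>) = 0 \<and>
      0 \<le> Re (qform M (op_sub (op_scale (complex_of_real (2 * spinJ M / \<Delta>)) (zzterm M x y)) (hop M \<Delta> x y)) \<psi>)" by simp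
  qed
  have i3: "op_le M (op_scale (complex_of_real (1 - 2 * spinJ M / \<Delta>)) (zzterm M x y)) (hxy M \<Delta> x y)"
    unfolding op_le_def
  proof
    fix \<psi>
    have "qform M (op_sub (hxy M \<Delta> x y) (op_scale (complex_of_real (1 - 2 * spinJ M / \<Delta>)) (zzterm M x y))) \<psi> = complex_of_real ((real M * Z \<psi> - R \<psi>) / \<Delta>)"
      unfolding qform_sub qform_scale hxyq hopq zq using J2 Dc by (simp add: field_simps)
    moreover have "0 \<le> (real M * Z \<psi> - R \<psi>) / \<Delta>" using bnd[of \<psi>] MZ[of \<psi>] Dp by simp
    ultimately show "Im (qform M (op_sub (hxy M \<Delta> x y) (op_scale (complex_of_real (1 - 2 * spinJ M / \<Delta>)) (zzterm M x y))) \<psi>) = 0 \<and>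
      0 \<le> Re (qform M (op_sub (hxy M \<Delta> x y) (op_scale (complex_of_real (1 - 2 * spinJ M / \<Delta>)) (zzterm M x y))) \<psi>)" by simp
  qed
  have i4: "op_le M (hxy M \<Delta> x y) (op_scale (complex_of_real (1 + 2 * spinJ M / \<Delta>)) (zzterm M x y))"
    unfolding op_le_def
  proof
    fix \<psi>
    have "qform M (op_sub (op_scale (complex_of_real (1 + 2 * spinJ M / \<Delta>)) (zzterm M x y)) (hxy M \<Delta> x y)) \<psi> = complex_of_real ((real M * Z \<psi> + R \<psi>) / \<Delta>)"
      unfolding qform_sub qform_scale hxyq hopq zq using J2 Dc by (simp add: field_simps)
    moreover have "0 \<le> (real M * Z \<psi> + R \<psi>) / \<Delta>" using bnd[of \<psi>] MZ[of \<psi>] Dp by simp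
    ultimately show "Im (qform M (op_sub (op_scale (complex_of_real (1 + 2 * spinJ M / \<Delta>)) (zzterm M x y)) (hxy M \<Delta> x y)) \<psi>) = 0 \<and>
      0 \<le> Re (qform M (op_sub (op_scale (complex_of_real (1 + 2 * spinJ M / \<Delta>)) (zzterm M x y)) (hxy M \<Delta> x y)) \<psi>)" by simp
  qed
  define S where "S \<psi> = (\<Sum>\<sigma>\<in>conf M. (real M - real (\<sigma> x) + (real M - real (\<sigma> y))) * (cmod (\<psi> \<sigma>))\<^sup>2)" for \<psi> :: "'v config \<Rightarrow> complex"
  have SZ: "0 \<le> real M / 2 * S \<psi> - Z \<psi>" for \<psi>
  proof -
    have "real M / 2 * S \<psi> - Z \<psi> = (\<Sum>\<sigma>\<in>conf M. (real M / 2 * (real M - real (\<sigma> x) + (real M - real (\<sigma> y))) - Zd M x y \<sigma>) * (cmod (\<psi> \<sigma>))\<^sup>2)"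
      by (simp add: S_def Z_def sum_distrib_left sum_subtractf[symmetric] left_diff_distrib mult.assoc)
    also have "\<dots> = (\<Sum>\<sigma>\<in>conf M. ((real M - real (\<sigma> x)) * (real M - real (\<sigma> y))) * (cmod (\<psi> \<sigma>))\<^sup>2)"
      by (intro sum.cong refl) (simp add: Zd_def spinJ_def algebra_simps power2_eq_square)
    also have "\<dots> \<ge> 0" by (intro sum_nonneg) (auto simp: conf_def)
    finally show ?thesis by simp
  qed
  have i5: "op_le M (op_scale (complex_of_real (1 + 2 * spinJ M / \<Delta>)) (zzterm M x y))
            (op_scale (complex_of_real (real M / 2 * (1 + real M / \<Delta>)))
               (op_add (at_site (Nloc M) x) (at_site (Nloc M) y)))"
    unfolding op_le_def
  proof
    fix \<psi>
    have "qform M (op_sub (op_scale (complex_of_real (real M / 2 * (1 + real M / \<Delta>)))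
               (op_add (at_site (Nloc M) x) (at_site (Nloc M) y))) (op_scale (complex_of_real (1 + 2 * spinJ M / \<Delta>)) (zzterm M x y))) \<psi>
       = complex_of_real ((1 + real M / \<Delta>) * (real M / 2 * S \<psi> - Z \<psi>))"
      unfolding qform_sub qform_scale Nq zq S_def[symmetric] using J2 Dc by (simp add: field_simps)
    moreover have "0 \<le> (1 + real M / \<Delta>) * (real M / 2 * S \<psi> - Z \<psi>)"
      using SZ[of \<psi>] Dp by simp
    ultimately show "Im (qform M (op_sub (op_scale (complex_of_real (real M / 2 * (1 + real M / \<Delta>)))
               (op_add (at_site (Nloc M) x) (at_site (Nloc M) y))) (op_scale (complex_of_real (1 + 2 * spinJ M / \<Delta>)) (zzterm M x y))) \<psi>) = 0 \<and>
      0 \<le> Re (qform M (op_sub (op_scale (complex_of_real (real M / 2 * (1 + real M / \<Delta>)))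
               (op_add (at_site (Nloc M) x) (at_site (Nloc M) y))) (op_scale (complex_of_real (1 + 2 * spinJ M / \<Delta>)) (zzterm M x y))) \<psi>)" by simp
  qed
  show ?thesis using i1 i2 i3 i4 i5 by blast
qed

end
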